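(* Let $d\ge3$, $h\ge1$, $1\le n\le h$, and let $j$ be a vertex at distance $n$ from the root, with parent $p(j)$. Then in $G(d,h)$, $$\theta(d,h+2-n)\,\bar{\mathbf{x}}_j-\theta(d,h+1-n)\,\bar{\mathbf{x}}_{p(j)}=0,$$ where $\theta(d,m):=\frac{(d-1)^m-1}{d-2}$.
   Context: Let $\mathcal{T}(d,h)$ be the rooted tree in which the root $0$ has $d$ children, every vertex at distance $1,\dots,h-1$ from the root has $d-1$ children, and the vertices at distance $h$ are leaves. Let $V$ be its vertex set, $A$ its adjacency matrix, $\Delta := dI-A$, and $\Lambda\subset\mathbb{Z}^V$ the lattice spanned by the rows of $\Delta$. Then $G(d,h):=\mathbb{Z}^V/\Lambda$; $\{\mathbf{x}_i:i\in V\}$ is the standard basis of $\mathbb{Z}^V$ and $\bar{\mathbf{v}}$ denotes the image of $\mathbf{v}$ in $G(d,h)$. *)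

theory Defs
  imports Main
begin

text \<open>Vertices of T(d,h) are encoded as paths from the root: the root is [],
  and a vertex at distance k is a list [c1,...,ck] where c1 < d (choice among
  the d children of the root) and ci < d-1 for i >= 2 (choice among the d-1
  children of a non-root internal vertex).\<close>

definition tree_vertices :: "nat \<Rightarrow> nat \<Rightarrow> nat list set" where
  "tree_vertices d h = {xs. length xs \<le> h \<and>
      (\<forall>i < length xs. xs ! i < (if i = 0 then d else d - 1))}"

definition tree_parent :: "nat list \<Rightarrow> nat list" where
  "tree_parent v = butlast v"

definition tree_adj :: "nat \<Rightarrow> nat \<Rightarrow> nat list \<Rightarrow> nat list \<Rightarrow> bool" where
  "tree_adj d h u v \<longleftrightarrow> u \<in> tree_vertices d h \<and> v \<in> tree_vertices d h \<and>
      ((v \<noteq> [] \<and> u = tree_parent v) \<or> (u \<noteq> [] \<and> v = tree_parent u))"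

definition Delta :: "nat \<Rightarrow> nat \<Rightarrow> nat list \<Rightarrow> nat list \<Rightarrow> int" where
  "Delta d h i k = (if i = k \<and> i \<in> tree_vertices d h then int d else 0)
                   - (if tree_adj d h i k then 1 else 0)"

text \<open>The lattice Lambda in Z^V spanned (over Z) by the rows of Delta.
  Vectors in Z^V are functions nat list => int (vanishing off V).\<close>
definition Lambda :: "nat \<Rightarrow> nat \<Rightarrow> (nat list \<Rightarrow> int) set" where
  "Lambda d h = {v. \<exists>c :: nat list \<Rightarrow> int.
      v = (\<lambda>k. \<Sum>i\<in>tree_vertices d h. c i * Delta d h i k)}"

definition xvec :: "nat list \<Rightarrow> nat list \<Rightarrow> int" where
  "xvec i = (\<lambda>k. if k = i then 1 else 0)"

text \<open>theta(d,m) = ((d-1)^m - 1)/(d-2); the division is exact for d >= 3.\<close>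
definition theta :: "nat \<Rightarrow> nat \<Rightarrow> int" where
  "theta d m = ((int d - 1) ^ m - 1) div (int d - 2)"

end

theory Submission
  imports Defs
begin

lemma geom_int: "((q::int) - 1) * (\<Sum>i<m. q ^ i) = q ^ m - 1"
  by (induction m) (auto simp: algebra_simps)

lemma theta_sum:
  assumes "d \<ge> 3"
  shows "theta d m = (\<Sum>i<m. (int d - 1) ^ i)"
proof -
  have "int d - 2 = (int d - 1) - 1" by simp
  hence "theta d m = ((int d - 1) - 1) * (\<Sum>i<m. (int d - 1) ^ i) div ((int d - 1) - 1)"
    unfolding theta_def using geom_int[of "int d - 1" m] by simp
  also have "\<dots> = (\<Sum>i<m. (int d - 1) ^ i)"
    using assms by (intro nonzero_mult_div_cancel_left) simp
  finally show ?thesis .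
qed

lemma theta_Suc:
  assumes "d \<ge> 3"
  shows "theta d (Suc m) = 1 + (int d - 1) * theta d m"
  unfolding theta_sum[OF assms] by (simp only: sum.lessThan_Suc_shift) (simp add: sum_distrib_left)

lemma theta_0: "d \<ge> 3 \<Longrightarrow> theta d 0 = 0"
  by (simp add: theta_sum)

lemma finite_V: "finite (tree_vertices d h)"
proof -
  have "tree_vertices d h \<subseteq> {xs. set xs \<subseteq> {..<d} \<and> length xs \<le> h}"
  proof
    fix xs assume xs: "xs \<in> tree_vertices d h"
    have "x < d" if "x \<in> set xs" for x
    proof -
      obtain i where "i < length xs" "xs ! i = x" using \<open>x \<in> set xs\<close> by (auto simp: in_set_conv_nth)
      with xs have "x < (if i = 0 then d else d - 1)" unfolding tree_vertices_def by auto
      thus ?thesis by (auto split: if_splits)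
    qed
    with xs show "xs \<in> {xs. set xs \<subseteq> {..<d} \<and> length xs \<le> h}"
      unfolding tree_vertices_def by auto
  qed
  thus ?thesis using finite_lists_length_le[of "{..<d}" h] finite_subset by blast
qed

lemma Lambda_add: "f \<in> Lambda d h \<Longrightarrow> g \<in> Lambda d h \<Longrightarrow> (\<lambda>k. f k + g k) \<in> Lambda d h"
  unfolding Lambda_def
proof clarify
  fix c1 c2 :: "nat list \<Rightarrow> int"
  show "\<exists>c. (\<lambda>k. (\<Sum>i\<in>tree_vertices d h. c1 i * Delta d h i k) + (\<Sum>i\<in>tree_vertices d h. c2 i * Delta d h i k))
     = (\<lambda>k. \<Sum>i\<in>tree_vertices d h. c i * Delta d h i k)"
    by (rule exI[of _ "\<lambda>i. c1 i + c2 i"]) (simp add: sum.distrib algebra_simps)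
qed

lemma Lambda_zero: "(\<lambda>k. 0) \<in> Lambda d h"
  unfolding Lambda_def by (rule CollectI, rule exI[of _ "\<lambda>i. 0"]) simp

lemma Lambda_scale: "f \<in> Lambda d h \<Longrightarrow> (\<lambda>k. a * f k) \<in> Lambda d h"
  unfolding Lambda_def
proof clarify
  fix c :: "nat list \<Rightarrow> int"
  show "\<exists>c'. (\<lambda>k. a * (\<Sum>i\<in>tree_vertices d h. c i * Delta d h i k))
     = (\<lambda>k. \<Sum>i\<in>tree_vertices d h. c' i * Delta d h i k)"
    by (rule exI[of _ "\<lambda>i. a * c i"]) (simp add: sum_distrib_left algebra_simps)
qed

lemma Lambda_sum:
  assumes "finite A" "\<And>a. a \<in> A \<Longrightarrow> f a \<in> Lambda d h"
  shows "(\<lambda>k. \<Sum>a\<in>A. f a k) \<in> Lambda d h"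
  using assms
proof (induction A rule: finite_induct)
  case empty
  then show ?case using Lambda_zero by simp
next
  case (insert x F)
  then show ?case using Lambda_add[of "f x" d h "\<lambda>k. \<Sum>a\<in>F. f a k"] by simp
qed

lemma Lambda_row: "i \<in> tree_vertices d h \<Longrightarrow> Delta d h i \<in> Lambda d h"
  unfolding Lambda_def
proof (rule CollectI, rule exI[of _ "\<lambda>i'. if i' = i then 1 else 0"], rule ext)
  fix k assume "i \<in> tree_vertices d h"
  have "(\<Sum>i'\<in>tree_vertices d h. (if i' = i then 1 else 0) * Delta d h i' k)
      = (\<Sum>i'\<in>tree_vertices d h. if i' = i then Delta d h i k else 0)"
    by (rule sum.cong) auto
  also have "\<dots> = Delta d h i k" using \<open>i \<in> tree_vertices d h\<close> by (simp add: finite_V)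
  finally show "Delta d h i k = (\<Sum>i'\<in>tree_vertices d h. (if i' = i then 1 else 0) * Delta d h i' k)" by simp
qed

lemma snoc_mem: "j @ [a] \<in> tree_vertices d h \<longleftrightarrow>
   j \<in> tree_vertices d h \<and> length j < h \<and> a < (if length j = 0 then d else d - 1)"
  unfolding tree_vertices_def
  by (auto simp: nth_append less_Suc_eq split: if_splits)

lemma butlast_mem: "j \<in> tree_vertices d h \<Longrightarrow> butlast j \<in> tree_vertices d h"
  unfolding tree_vertices_def by (auto simp: nth_butlast)

lemma children_iff:
  assumes "j \<in> tree_vertices d h" "j \<noteq> []"
  shows "(k \<in> tree_vertices d h \<and> k \<noteq> [] \<and> butlast k = j) \<longleftrightarrow>
         (length j < h \<and> (\<exists>a<d-1. k = j @ [a]))"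
proof
  assume H: "k \<in> tree_vertices d h \<and> k \<noteq> [] \<and> butlast k = j"
  then have "k = j @ [last k]" by (metis append_butlast_last_id)
  with H have "j @ [last k] \<in> tree_vertices d h" by simp
  with assms have "length j < h \<and> last k < d - 1" by (simp add: snoc_mem)
  then show "length j < h \<and> (\<exists>a<d-1. k = j @ [a])"
    using \<open>k = j @ [last k]\<close> by blast
next
  assume "length j < h \<and> (\<exists>a<d-1. k = j @ [a])"
  with assms show "k \<in> tree_vertices d h \<and> k \<noteq> [] \<and> butlast k = j"
    by (auto simp: snoc_mem)
qed

lemma sum_children: "(\<Sum>a<m. xvec (j @ [a]) k) = (if \<exists>a<m. k = j @ [a] then 1 else 0)"
proof (cases "\<exists>a<m. k = j @ [a]")
  case True
  then obtain a where a: "a < m" "k = j @ [a]" by blast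
  have "(\<Sum>b<m. xvec (j @ [b]) k) = (\<Sum>b<m. if b = a then 1 else 0)"
    by (rule sum.cong) (auto simp: xvec_def a)
  also have "\<dots> = 1" using a by simp
  finally show ?thesis using True by simp
next
  case False
  then have "(\<Sum>b<m. xvec (j @ [b]) k) = (\<Sum>b<m. 0)"
    by (intro sum.cong) (auto simp: xvec_def)
  then show ?thesis using False by simp
qed

lemma row_formula:
  assumes "d \<ge> 3" "j \<in> tree_vertices d h" "j \<noteq> []"
  shows "Delta d h j k = int d * xvec j k - xvec (butlast j) k
          - (if length j < h then (\<Sum>a<d-1. xvec (j @ [a]) k) else 0)"
proof -
  have bj: "butlast j \<in> tree_vertices d h" using assms butlast_mem by blast
  have adj: "tree_adj d h j k \<longleftrightarrow> (k \<in> tree_vertices d h \<and> k \<noteq> [] \<and> butlast k = j) \<or> k = butlast j"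
    unfolding tree_adj_def tree_parent_def using assms bj by auto
  have ne1: "k = butlast j \<Longrightarrow> k \<noteq> j" using assms(3)
    by (metis append_butlast_last_id append_self_conv list.distinct(1))
  have ne2: "k = j @ [a] \<Longrightarrow> k \<noteq> j" for a by simp
  have ne3: "k = j @ [a] \<Longrightarrow> k \<noteq> butlast j" for a
    by (metis length_append_singleton length_butlast Suc_n_not_le_n diff_le_self)
  show ?thesis
    unfolding Delta_def adj children_iff[OF assms(2,3)] sum_children
    using assms(2) ne1 ne2 ne3
    by (auto simp: xvec_def)
qed

lemma main:
  assumes "d \<ge> 3"
  shows "\<forall>j. j \<in> tree_vertices d h \<longrightarrow> 1 \<le> length j \<longrightarrow> length j \<le> h \<longrightarrow> h - length j = m \<longrightarrow>
    (\<lambda>k. theta d (m + 2) * xvec j k - theta d (m + 1) * xvec (butlast j) k) \<in> Lambda d h"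
proof (induction m)
  case 0
  show ?case
  proof (intro allI impI)
    fix j :: "nat list"
    assume j: "j \<in> tree_vertices d h" "1 \<le> length j" "length j \<le> h" "h - length j = 0"
    have t2: "theta d 2 = int d" and t1: "theta d 1 = 1"
      using theta_Suc[OF assms, of 1] theta_Suc[OF assms, of 0] theta_0[OF assms]
      by (simp_all add: numeral_2_eq_2)
    have "(\<lambda>k. theta d (0 + 2) * xvec j k - theta d (0 + 1) * xvec (butlast j) k) = Delta d h j"
    proof
      fix k
      have "Delta d h j k = int d * xvec j k - xvec (butlast j) k"
        using j row_formula[OF assms j(1), of k] by (cases j) auto
      then show "theta d (0 + 2) * xvec j k - theta d (0 + 1) * xvec (butlast j) k = Delta d h j k"
        by (simp only: add_0 t1 t2)
    qed
    then show "(\<lambda>k. theta d (0 + 2) * xvec j k - theta d (0 + 1) * xvec (butlast j) k) \<in> Lambda d h"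
      using Lambda_row[OF j(1)] by simp
  qed
next
  case (Suc m)
  show ?case
  proof (intro allI impI)
    fix j :: "nat list"
    assume j: "j \<in> tree_vertices d h" "1 \<le> length j" "length j \<le> h" "h - length j = Suc m"
    have lt: "length j < h" using j by simp
    have jne: "j \<noteq> []" using j by auto
    define W where "W a = (\<lambda>k. theta d (m + 2) * xvec (j @ [a]) k - theta d (m + 1) * xvec j k)" for a
    have W: "W a \<in> Lambda d h" if "a < d - 1" for a
    proof -
      have "j @ [a] \<in> tree_vertices d h" using j lt that jne by (simp add: snoc_mem)
      moreover have "h - length (j @ [a]) = m" using j by simp
      moreover have "length (j @ [a]) \<le> h" "1 \<le> length (j @ [a])" using lt by auto
      ultimately show ?thesis using Suc.IH[rule_format, of "j @ [a]"] unfolding W_def by simp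
    qed
    have L1: "(\<lambda>k. theta d (Suc m + 1) * Delta d h j k) \<in> Lambda d h"
      by (rule Lambda_scale[OF Lambda_row[OF j(1)]])
    have L2: "(\<lambda>k. \<Sum>a\<in>{..<d-1}. W a k) \<in> Lambda d h"
      by (rule Lambda_sum) (auto intro: W)
    have L: "(\<lambda>k. theta d (Suc m + 1) * Delta d h j k + (\<Sum>a\<in>{..<d-1}. W a k)) \<in> Lambda d h"
      using Lambda_add[OF L1 L2] .
    have t2: "theta d (m + 2) = 1 + (int d - 1) * theta d (m + 1)"
      using theta_Suc[OF assms, of "m+1"] by simp
    have t3: "theta d (Suc m + 2) = 1 + (int d - 1) * theta d (m + 2)"
      using theta_Suc[OF assms, of "m+2"] by simp
    have t2': "theta d (Suc m + 1) = theta d (m + 2)" by simp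
    have dd: "int (d - 1) = int d - 1" "int (d - Suc 0) = int d - 1" using assms by simp_all
    have "(\<lambda>k. theta d (Suc m + 2) * xvec j k - theta d (Suc m + 1) * xvec (butlast j) k)
        = (\<lambda>k. theta d (Suc m + 1) * Delta d h j k + (\<Sum>a\<in>{..<d-1}. W a k))"
    proof
      fix k
      have S: "(\<Sum>a\<in>{..<d-1}. W a k) = theta d (m + 2) * (\<Sum>a<d-1. xvec (j @ [a]) k)
                 - (int d - 1) * theta d (m + 1) * xvec j k"
        unfolding W_def by (simp add: sum_subtractf sum_distrib_left dd)
      show "theta d (Suc m + 2) * xvec j k - theta d (Suc m + 1) * xvec (butlast j) k
          = theta d (Suc m + 1) * Delta d h j k + (\<Sum>a\<in>{..<d-1}. W a k)"
        unfolding S row_formula[OF assms j(1) jne] t2' t3 using lt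
        by (simp add: theta_Suc[OF assms] algebra_simps)
    qed
    with L show "(\<lambda>k. theta d (Suc m + 2) * xvec j k - theta d (Suc m + 1) * xvec (butlast j) k) \<in> Lambda d h"
      by simp
  qed
qed

theorem lemma7p1:
  fixes d h n :: nat and j :: "nat list"
  assumes "d \<ge> 3" and "h \<ge> 1" and "1 \<le> n" and "n \<le> h"
    and "j \<in> tree_vertices d h" and "length j = n"
  shows "(\<lambda>k. theta d (h + 2 - n) * xvec j k - theta d (h + 1 - n) * xvec (tree_parent j) k)
           \<in> Lambda d h"
proof -
  have "h + 2 - n = (h - n) + 2" "h + 1 - n = (h - n) + 1" using assms by auto
  then show ?thesis using main[OF assms(1), of h "h - n"] assms unfolding tree_parent_def by simp
qed

end
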